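(* Let $R$ be a principal ideal domain and let $a\in R$ be a nonzero non-unit. Then the left ideal $Ra$ is structurally prime if and only if $a$ is left totally unbounded or $a$ is a factor of an Inv-atom.
   Context: A principal ideal domain (PID) is a (not necessarily commutative) domain in which every left ideal and every right ideal is principal. A left ideal $\mathfrak{p}$ is structurally prime if $\mathfrak{p}\neq R$ and, for left ideals $A,B$, $AB\subseteq\mathfrak{p}$ implies $A\subseteq\mathfrak{p}$ or $B\subseteq\mathfrak{p}$. A nonzero $c$ is invariant if $Rc=cR$. An Inv-atom is an invariant non-unit $p$ such that $p=bc$ with $b,c$ invariant implies $b$ or $c$ is a unit. $a$ is a factor of $p$ if $p=ras$ for some $r,s\in R$; $a$ is a left factor of $b$ if $b\in aR$. An element $p$ is bounded if $Rp$ contains a nonzero two-sided ideal. A nonzero non-unit is left totally unbounded if it has no non-unit bounded left factors. *)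

theory Defs
  imports Main
begin

text \<open>The ring R is the whole (not necessarily commutative) type 'a, a domain
  (class ring_1_no_zero_divisors: ring with 1, 0 \<noteq> 1, no zero divisors).\<close>

definition unit_el :: "'a::ring_1 \<Rightarrow> bool" where
  "unit_el u \<longleftrightarrow> (\<exists>v. u * v = 1 \<and> v * u = 1)"

definition left_ideal :: "'a::ring_1 set \<Rightarrow> bool" where
  "left_ideal I \<longleftrightarrow> 0 \<in> I \<and> (\<forall>x\<in>I. \<forall>y\<in>I. x + y \<in> I) \<and> (\<forall>r. \<forall>x\<in>I. r * x \<in> I)"

definition right_ideal :: "'a::ring_1 set \<Rightarrow> bool" where
  "right_ideal I \<longleftrightarrow> 0 \<in> I \<and> (\<forall>x\<in>I. \<forall>y\<in>I. x + y \<in> I) \<and> (\<forall>r. \<forall>x\<in>I. x * r \<in> I)"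

definition two_sided_ideal :: "'a::ring_1 set \<Rightarrow> bool" where
  "two_sided_ideal I \<longleftrightarrow> left_ideal I \<and> right_ideal I"

definition lprinc :: "'a::ring_1 \<Rightarrow> 'a set" where
  "lprinc c = {r * c | r. True}"

definition rprinc :: "'a::ring_1 \<Rightarrow> 'a set" where
  "rprinc c = {c * r | r. True}"

inductive_set ideal_prod :: "'a::ring_1 set \<Rightarrow> 'a set \<Rightarrow> 'a set" for A B where
  zero: "0 \<in> ideal_prod A B"
| add: "\<lbrakk>a \<in> A; b \<in> B; x \<in> ideal_prod A B\<rbrakk> \<Longrightarrow> a * b + x \<in> ideal_prod A B"

definition is_PID :: "'a::ring_1_no_zero_divisors itself \<Rightarrow> bool" where
  "is_PID _ \<longleftrightarrow> (\<forall>I::'a set. left_ideal I \<longrightarrow> (\<exists>c. I = lprinc c))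
                 \<and> (\<forall>I::'a set. right_ideal I \<longrightarrow> (\<exists>c. I = rprinc c))"

definition structurally_prime :: "'a::ring_1 set \<Rightarrow> bool" where
  "structurally_prime P \<longleftrightarrow> left_ideal P \<and> P \<noteq> UNIV \<and>
     (\<forall>A B. left_ideal A \<longrightarrow> left_ideal B \<longrightarrow> ideal_prod A B \<subseteq> P \<longrightarrow> A \<subseteq> P \<or> B \<subseteq> P)"

definition invariant_el :: "'a::ring_1 \<Rightarrow> bool" where
  "invariant_el c \<longleftrightarrow> c \<noteq> 0 \<and> lprinc c = rprinc c"

definition Inv_atom :: "'a::ring_1 \<Rightarrow> bool" where
  "Inv_atom p \<longleftrightarrow> invariant_el p \<and> \<not> unit_el p \<and>
     (\<forall>b c. invariant_el b \<longrightarrow> invariant_el c \<longrightarrow> p = b * c \<longrightarrow> unit_el b \<or> unit_el c)"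

definition factor_of :: "'a::ring_1 \<Rightarrow> 'a \<Rightarrow> bool" where
  "factor_of a p \<longleftrightarrow> (\<exists>r s. p = r * a * s)"

definition left_factor_of :: "'a::ring_1 \<Rightarrow> 'a \<Rightarrow> bool" where
  "left_factor_of a b \<longleftrightarrow> b \<in> rprinc a"

definition bounded_el :: "'a::ring_1 \<Rightarrow> bool" where
  "bounded_el p \<longleftrightarrow> (\<exists>I. two_sided_ideal I \<and> I \<noteq> {0} \<and> I \<subseteq> lprinc p)"

definition left_totally_unbounded :: "'a::ring_1 \<Rightarrow> bool" where
  "left_totally_unbounded a \<longleftrightarrow> a \<noteq> 0 \<and> \<not> unit_el a \<and>
     (\<forall>b. left_factor_of b a \<longrightarrow> \<not> unit_el b \<longrightarrow> \<not> bounded_el b)"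

end

theory Submission
  imports Defs
begin

lemma inv_comm:
  fixes x y :: "'a::ring_1_no_zero_divisors"
  assumes "x * y = 1" shows "y * x = 1"
proof -
  have y0: "y \<noteq> 0" using assms by auto
  have "(y * x) * y = 1 * y" by (metis assms mult.assoc mult_1_right mult_1_left)
  then show ?thesis using y0 by (simp only: mult_cancel_right) simp
qed

lemma unit_l:
  fixes x y :: "'a::ring_1_no_zero_divisors"
  assumes "x * y = 1" shows "unit_el x"
  using assms inv_comm unfolding unit_el_def by blast

lemma unit_r:
  fixes x y :: "'a::ring_1_no_zero_divisors"
  assumes "x * y = 1" shows "unit_el y"
  using assms inv_comm unfolding unit_el_def by blast

lemma mem_lprinc: "x \<in> lprinc c \<longleftrightarrow> (\<exists>r. x = r * c)"
  unfolding lprinc_def by auto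

lemma mem_rprinc: "x \<in> rprinc c \<longleftrightarrow> (\<exists>r. x = c * r)"
  unfolding rprinc_def by auto

lemma lprinc_li: "left_ideal (lprinc (c::'a::ring_1))"
  unfolding left_ideal_def
proof (intro conjI ballI allI)
  show "0 \<in> lprinc c" unfolding mem_lprinc by (rule exI[of _ 0]) simp
next
  fix x y assume "x \<in> lprinc c" "y \<in> lprinc c"
  then obtain r s where "x = r * c" "y = s * c" unfolding mem_lprinc by blast
  then have "x + y = (r + s) * c" by (simp add: distrib_right)
  then show "x + y \<in> lprinc c" unfolding mem_lprinc by blast
next
  fix t x assume "x \<in> lprinc c"
  then obtain r where "x = r * c" unfolding mem_lprinc by blast
  then have "t * x = (t * r) * c" by (simp add: mult.assoc)
  then show "t * x \<in> lprinc c" unfolding mem_lprinc by blast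
qed

lemma prod_sub:
  assumes "left_ideal P" "\<And>a b. a \<in> A \<Longrightarrow> b \<in> B \<Longrightarrow> a * b \<in> P"
  shows "ideal_prod A B \<subseteq> P"
proof
  fix x assume "x \<in> ideal_prod A B"
  then show "x \<in> P"
    by (induction rule: ideal_prod.induct) (use assms in \<open>auto simp: left_ideal_def\<close>)
qed

lemma prod_mem: "a \<in> A \<Longrightarrow> b \<in> B \<Longrightarrow> a * b \<in> ideal_prod A B"
  using ideal_prod.add[OF _ _ ideal_prod.zero] by fastforce

lemma li_one:
  assumes "left_ideal I" "(1::'a::ring_1) \<in> I" shows "I = UNIV"
  using assms unfolding left_ideal_def by (metis UNIV_eq_I mult_1_right)

lemma lprinc_unit:
  fixes a :: "'a::ring_1_no_zero_divisors"
  assumes "1 \<in> lprinc a" shows "unit_el a"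
  using assms unfolding mem_lprinc by (metis unit_r)

lemma core_two:
  fixes a :: "'a::ring_1"
  shows "two_sided_ideal {z. \<forall>r. z * r \<in> lprinc a}"
  unfolding two_sided_ideal_def left_ideal_def right_ideal_def
proof (intro conjI ballI allI)
  have L: "left_ideal (lprinc a)" by (rule lprinc_li)
  have "0 * r \<in> lprinc a" for r using L unfolding left_ideal_def by simp
  then show "0 \<in> {z. \<forall>r. z * r \<in> lprinc a}" by blast
  then show "0 \<in> {z. \<forall>r. z * r \<in> lprinc a}" .
  fix x y assume x: "x \<in> {z. \<forall>r. z * r \<in> lprinc a}" and y: "y \<in> {z. \<forall>r. z * r \<in> lprinc a}"
  show "x + y \<in> {z. \<forall>r. z * r \<in> lprinc a}"
  proof (intro CollectI allI)
    fix r show "(x + y) * r \<in> lprinc a" using x y L unfolding left_ideal_def distrib_right by blast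
  qed
  then show "x + y \<in> {z. \<forall>r. z * r \<in> lprinc a}" .
next
  have L: "left_ideal (lprinc a)" by (rule lprinc_li)
  fix t x assume x: "x \<in> {z. \<forall>r. z * r \<in> lprinc a}"
  show "t * x \<in> {z. \<forall>r. z * r \<in> lprinc a}"
  proof (intro CollectI allI)
    fix r show "t * x * r \<in> lprinc a" using x L unfolding left_ideal_def mult.assoc by blast
  qed
  show "x * t \<in> {z. \<forall>r. z * r \<in> lprinc a}"
  proof (intro CollectI allI)
    fix r show "x * t * r \<in> lprinc a" using x unfolding mult.assoc by blast
  qed
qed

lemma two_sided_inv:
  fixes I :: "'a::ring_1_no_zero_divisors set"
  assumes pid: "is_PID TYPE('a)" and I: "two_sided_ideal I" and nz: "I \<noteq> {0}"
  shows "\<exists>d. d \<noteq> 0 \<and> I = lprinc d \<and> I = rprinc d"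
proof -
  have li: "left_ideal I" and ri: "right_ideal I" using I two_sided_ideal_def by auto
  obtain c where c: "I = lprinc c" using pid li unfolding is_PID_def by blast
  obtain d where d: "I = rprinc d" using pid ri unfolding is_PID_def by blast
  have l0: "lprinc (0::'a) = {0}" by (auto simp: lprinc_def)
  have c0: "c \<noteq> 0" using nz c l0 by auto
  have "c \<in> I" using c mem_lprinc by (metis mult_1_left)
  then obtain u where u: "c = d * u" using d mem_rprinc by blast
  have "d \<in> I" using d mem_rprinc by (metis mult_1_right)
  then obtain v where v: "d = v * c" using c mem_lprinc by blast
  have "c * u \<in> I" using \<open>c \<in> I\<close> ri unfolding right_ideal_def by blast
  then obtain w where w: "c * u = w * c" using c mem_lprinc by blast
  have "(v * w) * c = 1 * c" using u v w by (simp add: mult.assoc)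
  then have vw: "v * w = 1" using c0 by (simp only: mult_cancel_right) simp
  then have wv: "w * v = 1" by (rule inv_comm)
  have cw: "c = w * d" using v wv by (simp add: mult.assoc[symmetric])
  have d0: "d \<noteq> 0" using cw c0 by auto
  have "I = lprinc d"
  proof
    show "I \<subseteq> lprinc d"
    proof
      fix z assume "z \<in> I"
      then obtain r where "z = r * c" using c mem_lprinc by blast
      then have "z = (r * w) * d" using cw by (simp add: mult.assoc)
      then show "z \<in> lprinc d" using mem_lprinc by blast
    qed
    show "lprinc d \<subseteq> I"
    proof
      fix z assume "z \<in> lprinc d"
      then obtain r where "z = r * d" using mem_lprinc by blast
      then show "z \<in> I" using \<open>d \<in> I\<close> li unfolding left_ideal_def by blast
    qed
  qed
  then show ?thesis using d d0 by blast
qed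

lemma inv_factor:
  fixes p :: "'a::ring_1_no_zero_divisors"
  assumes "invariant_el p" "p = u * v"
  shows "\<exists>t. p = t * u" "\<exists>t. p = v * t"
proof -
  have p0: "p \<noteq> 0" and eq: "lprinc p = rprinc p" using assms(1) invariant_el_def by auto
  have v0: "v \<noteq> 0" and u0: "u \<noteq> 0" using p0 assms(2) by auto
  have "p * v \<in> lprinc p" using eq mem_rprinc by blast
  then obtain t where "p * v = t * p" using mem_lprinc by blast
  then have "p * v = (t * u) * v" using assms(2) by (simp add: mult.assoc)
  then show "\<exists>t. p = t * u" using v0 by (simp only: mult_cancel_right) auto
  have "u * p \<in> rprinc p" using eq mem_lprinc by blast
  then obtain t where "u * p = p * t" using mem_rprinc by blast
  then have "u * p = u * (v * t)" using assms(2) by (simp add: mult.assoc)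
  then show "\<exists>t. p = v * t" using u0 by (simp only: mult_cancel_left) auto
qed

lemma inv_factor_in:
  fixes p :: "'a::ring_1_no_zero_divisors"
  assumes "invariant_el p" "p = r * a * s"
  shows "p \<in> lprinc a"
proof -
  obtain t where "p = (a * s) * t" using inv_factor(2)[OF assms(1), of r "a * s"] assms(2)
    by (auto simp: mult.assoc)
  then have "p = a * (s * t)" by (simp add: mult.assoc)
  then obtain t' where "p = t' * a" using inv_factor(1)[OF assms(1)] by blast
  then show ?thesis using mem_lprinc by blast
qed

lemma atom_max:
  fixes p :: "'a::ring_1_no_zero_divisors"
  assumes pid: "is_PID TYPE('a)" and at: "Inv_atom p" and J: "two_sided_ideal J"
    and pJ: "p \<in> J" and JU: "J \<noteq> UNIV"
  shows "J \<subseteq> lprinc p"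
proof -
  have ip: "invariant_el p" and atm: "\<forall>b c. invariant_el b \<longrightarrow> invariant_el c \<longrightarrow> p = b * c \<longrightarrow> unit_el b \<or> unit_el c"
    using at Inv_atom_def by auto
  have p0: "p \<noteq> 0" and eqp: "lprinc p = rprinc p" using ip invariant_el_def by auto
  have "J \<noteq> {0}" using pJ p0 by auto
  then obtain c where c0: "c \<noteq> 0" and cl: "J = lprinc c" and cr: "J = rprinc c"
    using two_sided_inv[OF pid J] by blast
  have ic: "invariant_el c" unfolding invariant_el_def using c0 cl cr by simp
  obtain u where u: "p = u * c" using pJ cl mem_lprinc by blast
  have u0: "u \<noteq> 0" using u p0 by auto
  have "lprinc u = rprinc u"
  proof
    show "lprinc u \<subseteq> rprinc u"
    proof
      fix x assume "x \<in> lprinc u"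
      then obtain z where x: "x = z * u" using mem_lprinc by blast
      have "z * p \<in> rprinc p" using eqp mem_lprinc by blast
      then obtain w where w: "z * p = p * w" using mem_rprinc by blast
      have "c * w \<in> lprinc c" using cl cr mem_rprinc by blast
      then obtain w' where w': "c * w = w' * c" using mem_lprinc by blast
      have "(z * u) * c = (u * w') * c" using u w w' by (simp add: mult.assoc)
      then have "z * u = u * w'" using c0 by (simp only: mult_cancel_right) simp
      then show "x \<in> rprinc u" using x mem_rprinc by blast
    qed
    show "rprinc u \<subseteq> lprinc u"
    proof
      fix x assume "x \<in> rprinc u"
      then obtain z where x: "x = u * z" using mem_rprinc by blast
      have "z * c \<in> rprinc c" using cl cr mem_lprinc by blast
      then obtain w where w: "z * c = c * w" using mem_rprinc by blast
      have "p * w \<in> lprinc p" using eqp mem_rprinc by blast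
      then obtain w' where w': "p * w = w' * p" using mem_lprinc by blast
      have "(u * z) * c = (w' * u) * c" using u w w' by (simp add: mult.assoc)
      then have "u * z = w' * u" using c0 by (simp only: mult_cancel_right) simp
      then show "x \<in> lprinc u" using x mem_lprinc by blast
    qed
  qed
  then have iu: "invariant_el u" using u0 unfolding invariant_el_def by blast
  have "unit_el u \<or> unit_el c" using atm[rule_format, OF iu ic u] .
  then show ?thesis
  proof
    assume "unit_el c"
    then obtain v where "v * c = 1" unfolding unit_el_def by blast
    then have "1 \<in> J" unfolding cl mem_lprinc by (intro exI[of _ v]) simp
    then have "J = UNIV" using li_one J unfolding two_sided_ideal_def by blast
    then show ?thesis using JU by blast
  next
    assume "unit_el u"
    then obtain v where "v * u = 1" unfolding unit_el_def by blast
    then have "c = v * p" using u by (simp add: mult.assoc[symmetric])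
    show ?thesis
    proof
      fix z assume "z \<in> J"
      then obtain r where "z = r * c" unfolding cl mem_lprinc by blast
      then have "z = (r * v) * p" using \<open>c = v * p\<close> by (simp add: mult.assoc)
      then show "z \<in> lprinc p" unfolding mem_lprinc by blast
    qed
  qed
qed

lemma key:
  fixes a :: "'a::ring_1_no_zero_divisors"
  assumes pid: "is_PID TYPE('a)" and a0: "a \<noteq> 0" and y: "y \<notin> lprinc a"
    and xy: "\<And>r. x * (r * y) \<in> lprinc a"
  shows "\<exists>a' d. a = a' * d \<and> \<not> unit_el a' \<and> (\<forall>r. x * r \<in> lprinc a')"
proof -
  let ?S = "{s * a + t * y | s t. True}"
  have "left_ideal ?S" unfolding left_ideal_def
  proof (intro conjI ballI allI)
    show "0 \<in> ?S" by (rule CollectI, rule exI[of _ 0], rule exI[of _ 0], simp)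
  next
    fix u v assume "u \<in> ?S" "v \<in> ?S"
    then obtain s1 t1 s2 t2 where "u = s1 * a + t1 * y" "v = s2 * a + t2 * y" by blast
    then have "u + v = (s1 + s2) * a + (t1 + t2) * y" by (simp add: algebra_simps)
    then show "u + v \<in> ?S" by blast
  next
    fix r u assume "u \<in> ?S"
    then obtain s1 t1 where "u = s1 * a + t1 * y" by blast
    then have "r * u = (r * s1) * a + (r * t1) * y" by (simp add: algebra_simps)
    then show "r * u \<in> ?S" by blast
  qed
  then obtain d where d: "?S = lprinc d" using pid unfolding is_PID_def by blast
  have "a \<in> ?S" by (rule CollectI, rule exI[of _ 1], rule exI[of _ 0], simp)
  then obtain a' where a': "a = a' * d" using d mem_lprinc by blast
  have "y \<in> ?S" by (rule CollectI, rule exI[of _ 0], rule exI[of _ 1], simp)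
  then obtain q where q: "y = q * d" using d mem_lprinc by blast
  have "d \<in> ?S" using d mem_lprinc by (metis mult_1_left)
  then obtain s t where st: "d = s * a + t * y" by blast
  have d0: "d \<noteq> 0" using a' a0 by auto
  have nu: "\<not> unit_el a'"
  proof
    assume "unit_el a'"
    then obtain v where "v * a' = 1" unfolding unit_el_def by blast
    then have "d = v * a" using a' by (simp add: mult.assoc[symmetric])
    then have "y = (q * v) * a" using q by (simp add: mult.assoc)
    then show False using y mem_lprinc by blast
  qed
  have "\<forall>r. x * r \<in> lprinc a'"
  proof
    fix r
    have "x * (r * t * y) \<in> lprinc a" using xy by blast
    then obtain k where k: "x * (r * t * y) = k * a" using mem_lprinc by blast
    have "x * r * d = (x * r * s) * a + x * (r * t * y)" using st by (simp add: algebra_simps)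
    also have "\<dots> = (x * r * s + k) * a" using k by (simp add: algebra_simps)
    also have "\<dots> = ((x * r * s + k) * a') * d" using a' by (simp add: mult.assoc)
    finally have "x * r = (x * r * s + k) * a'" using d0 by (simp only: mult_cancel_right) simp
    then show "x * r \<in> lprinc a'" using mem_lprinc by blast
  qed
  then show ?thesis using a' nu by blast
qed

theorem proposition3p13:
  fixes a :: "'a::ring_1_no_zero_divisors"
  assumes "is_PID TYPE('a)"
    and "a \<noteq> 0" and "\<not> unit_el a"
  shows "structurally_prime (lprinc a) \<longleftrightarrow>
           left_totally_unbounded a \<or> (\<exists>p. Inv_atom p \<and> factor_of a p)"
proof -
  note pid = assms(1) and a0 = assms(2) and au = assms(3)
  have nU: "lprinc a \<noteq> UNIV" using lprinc_unit au by blast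
  have lsub: "lprinc q \<subseteq> lprinc a" if qa: "q \<in> lprinc a" for q
  proof
    fix z assume "z \<in> lprinc q"
    then obtain r where "z = r * q" unfolding mem_lprinc by blast
    moreover obtain k where "q = k * a" using qa unfolding mem_lprinc by blast
    ultimately have "z = (r * k) * a" by (simp add: mult.assoc)
    then show "z \<in> lprinc a" unfolding mem_lprinc by blast
  qed
  show ?thesis
  proof
    assume sp: "structurally_prime (lprinc a)"
    show "left_totally_unbounded a \<or> (\<exists>p. Inv_atom p \<and> factor_of a p)"
    proof (cases "left_totally_unbounded a")
      case True
      then show ?thesis by blast
    next
      case False
      then obtain b where ba: "left_factor_of b a" and bu: "\<not> unit_el b" and bb: "bounded_el b"
        using a0 au unfolding left_totally_unbounded_def by blast
      obtain e where e: "a = b * e" using ba unfolding left_factor_of_def mem_rprinc by blast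
      obtain I where I: "two_sided_ideal I" "I \<noteq> {0}" "I \<subseteq> lprinc b"
        using bb unfolding bounded_el_def by blast
      have liI: "left_ideal I" and riI: "right_ideal I" using I(1) two_sided_ideal_def by auto
      have "ideal_prod I (lprinc e) \<subseteq> lprinc a"
      proof (rule prod_sub[OF lprinc_li])
        fix i z assume i: "i \<in> I" and z: "z \<in> lprinc e"
        obtain r where r: "z = r * e" using z mem_lprinc by blast
        have "i * r \<in> I" using i riI unfolding right_ideal_def by blast
        then have "i * r \<in> lprinc b" using I(3) by blast
        then obtain t where t: "i * r = t * b" unfolding mem_lprinc by blast
        have "i * z = (i * r) * e" unfolding r by (simp only: mult.assoc)
        also have "\<dots> = t * a" unfolding t e by (simp only: mult.assoc)
        finally have "i * z = t * a" .
        then show "i * z \<in> lprinc a" using mem_lprinc by blast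
      qed
      then have "I \<subseteq> lprinc a \<or> lprinc e \<subseteq> lprinc a"
        using sp liI lprinc_li unfolding structurally_prime_def by blast
      moreover have "\<not> lprinc e \<subseteq> lprinc a"
      proof
        assume "lprinc e \<subseteq> lprinc a"
        moreover have "e \<in> lprinc e" unfolding mem_lprinc by (rule exI[of _ 1]) simp
        ultimately obtain t where te: "e = t * a" using mem_lprinc by blast
        have "(t * b) * e = t * a" unfolding e by (simp only: mult.assoc)
        also have "\<dots> = 1 * e" using te by simp
        finally have "(t * b) * e = 1 * e" .
        moreover have "e \<noteq> 0" using e a0 by auto
        ultimately have "t * b = 1" by (simp only: mult_cancel_right) simp
        then show False using unit_r bu by blast
      qed
      ultimately have IA: "I \<subseteq> lprinc a" by blast
      define C where "C = {z. \<forall>r. z * r \<in> lprinc a}"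
      have tC: "two_sided_ideal C" unfolding C_def by (rule core_two)
      have "I \<subseteq> C" unfolding C_def using IA riI unfolding right_ideal_def by blast
      moreover have "0 \<in> I" using liI unfolding left_ideal_def by blast
      ultimately have "C \<noteq> {0}" using I(2) by blast
      then obtain c where c0: "c \<noteq> 0" and cl: "C = lprinc c" and cr: "C = rprinc c"
        using two_sided_inv[OF pid tC] by blast
      have CA: "C \<subseteq> lprinc a"
      proof
        fix z assume "z \<in> C" then have "z * 1 \<in> lprinc a" unfolding C_def by blast
        then show "z \<in> lprinc a" by simp
      qed
      have cC: "c \<in> C" unfolding cl mem_lprinc by (rule exI[of _ 1]) simp
      have ic: "invariant_el c" unfolding invariant_el_def using c0 cl cr by simp
      have "\<exists>p. Inv_atom p \<and> factor_of a p"
      proof -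
        have "c \<in> lprinc a" using cC CA by blast
        then obtain r where "c = r * a" unfolding mem_lprinc by blast
        then have "c = r * a * 1" by simp
        then have fac: "factor_of a c" unfolding factor_of_def by blast
        have nuc: "\<not> unit_el c"
          proof
            assume "unit_el c"
            then obtain v where "v * c = 1" unfolding unit_el_def by blast
            then have "1 \<in> C" unfolding cl mem_lprinc by (intro exI[of _ v]) simp
            then have "1 \<in> lprinc a" using CA by blast
            then show False using lprinc_unit au by blast
          qed
        have atm: "unit_el u \<or> unit_el v"
          if iu: "invariant_el u" and iv: "invariant_el v" and cuv: "c = u * v" for u v
        proof -
          have eu: "lprinc u = rprinc u" using iu unfolding invariant_el_def by (rule conjunct2)
          have u0: "u \<noteq> 0" using iu unfolding invariant_el_def by (rule conjunct1)
          have ev: "lprinc v = rprinc v" using iv unfolding invariant_el_def by (rule conjunct2)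
          have v0: "v \<noteq> 0" using iv unfolding invariant_el_def by (rule conjunct1)
          show ?thesis
          proof (rule ccontr)
            assume nn: "\<not> (unit_el u \<or> unit_el v)"
            have "ideal_prod (lprinc u) (lprinc v) \<subseteq> lprinc a"
            proof (rule prod_sub[OF lprinc_li])
              fix x y assume "x \<in> lprinc u" "y \<in> lprinc v"
              then obtain r s where xy: "x = r * u" "y = s * v" unfolding mem_lprinc by blast
              have "u * s \<in> rprinc u" unfolding mem_rprinc by blast
              then have "u * s \<in> lprinc u" using eu by simp
              then obtain s' where s': "u * s = s' * u" unfolding mem_lprinc by blast
              have "x * y = r * (u * s) * v" unfolding xy by (simp only: mult.assoc)
              also have "\<dots> = (r * s') * c" unfolding s' cuv by (simp only: mult.assoc)
              finally have "x * y = (r * s') * c" .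
              then have "x * y \<in> C" unfolding cl mem_lprinc by blast
              then show "x * y \<in> lprinc a" using CA by blast
            qed
            then have "lprinc u \<subseteq> lprinc a \<or> lprinc v \<subseteq> lprinc a"
              using sp lprinc_li unfolding structurally_prime_def by blast
            then show False
            proof
              assume ua: "lprinc u \<subseteq> lprinc a"
              have "u \<in> C" unfolding C_def using ua eu mem_rprinc by blast
              then obtain t where tc: "u = t * c" using cl mem_lprinc by blast
              have "t * u \<in> rprinc u" using eu mem_lprinc by blast
              then obtain t' where t': "t * u = u * t'" using mem_rprinc by blast
              have "u * 1 = t * c" using tc by simp
              also have "\<dots> = (t * u) * v" unfolding cuv by (simp only: mult.assoc)
              also have "\<dots> = u * (t' * v)" unfolding t' by (simp only: mult.assoc)
              finally have "u * 1 = u * (t' * v)" .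
              then have "t' * v = 1" using u0 by (simp only: mult_cancel_left) simp
              then show False using unit_r nn by blast
            next
              assume va: "lprinc v \<subseteq> lprinc a"
              have "v \<in> C" unfolding C_def using va ev mem_rprinc by blast
              then obtain t where tc: "v = t * c" using cl mem_lprinc by blast
              have "(t * u) * v = t * c" unfolding cuv by (simp only: mult.assoc)
              also have "\<dots> = 1 * v" using tc by simp
              finally have "(t * u) * v = 1 * v" .
              then have "t * u = 1" using v0 by (simp only: mult_cancel_right) simp
              then show False using unit_r nn by blast
            qed
          qed
        qed
        have "Inv_atom c" unfolding Inv_atom_def by (intro conjI ic nuc allI impI atm)
        then show ?thesis using fac by blast
      qed
      then show ?thesis by blast
    qed
  next
    assume H: "left_totally_unbounded a \<or> (\<exists>p. Inv_atom p \<and> factor_of a p)"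
    show "structurally_prime (lprinc a)" unfolding structurally_prime_def
    proof (intro conjI allI impI)
      show "left_ideal (lprinc a)" by (rule lprinc_li)
      show "lprinc a \<noteq> UNIV" by (rule nU)
      fix A B assume lA: "left_ideal A" and lB: "left_ideal B"
        and AB: "ideal_prod A B \<subseteq> lprinc a"
      show "A \<subseteq> lprinc a \<or> B \<subseteq> lprinc a"
      proof (rule ccontr)
        assume "\<not> (A \<subseteq> lprinc a \<or> B \<subseteq> lprinc a)"
        then obtain x y where x: "x \<in> A" "x \<notin> lprinc a" and y: "y \<in> B" "y \<notin> lprinc a" by blast
        have "x * (r * y) \<in> lprinc a" for r
          using prod_mem[OF x(1), of "r * y" B] lB y(1) AB unfolding left_ideal_def by blast
        then obtain a' d where ad: "a = a' * d" and nu: "\<not> unit_el a'" and xr: "\<forall>r. x * r \<in> lprinc a'"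
          using key[OF pid a0 y(2)] by blast
        define C where "C = {z. \<forall>r. z * r \<in> lprinc a'}"
        have tC: "two_sided_ideal C" unfolding C_def by (rule core_two)
        have xC: "x \<in> C" unfolding C_def using xr by blast
        have CA: "C \<subseteq> lprinc a'"
        proof
          fix z assume "z \<in> C" then have "z * 1 \<in> lprinc a'" unfolding C_def by blast
          then show "z \<in> lprinc a'" by simp
        qed
        from H show False
        proof
          assume ltu: "left_totally_unbounded a"
          have "left_factor_of a' a" unfolding left_factor_of_def mem_rprinc using ad by blast
          then have nb: "\<not> bounded_el a'" using ltu nu unfolding left_totally_unbounded_def by blast
          have "(0::'a) \<in> lprinc a" using lprinc_li[of a] unfolding left_ideal_def by blast
          then have "x \<noteq> 0" using x(2) by blast
          then have "C \<noteq> {0}" using xC by blast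
          then have "bounded_el a'" unfolding bounded_el_def using tC CA by blast
          then show False using nb by blast
        next
          assume "\<exists>p. Inv_atom p \<and> factor_of a p"
          then obtain p r s where at: "Inv_atom p" and prs: "p = r * a * s"
            unfolding factor_of_def by blast
          have ip: "invariant_el p" using at unfolding Inv_atom_def by blast
          have pa: "p \<in> lprinc a" using inv_factor_in[OF ip prs] .
          have "p = r * a' * (d * s)" using prs ad by (simp add: mult.assoc)
          then have pa': "p \<in> lprinc a'" using inv_factor_in[OF ip] by blast
          have "p \<in> C" unfolding C_def
          proof (intro CollectI allI)
            fix q
            have "p * q \<in> rprinc p" unfolding mem_rprinc by blast
            then have "p * q \<in> lprinc p" using ip unfolding invariant_el_def by simp
            then obtain t where "p * q = t * p" using mem_lprinc by blast
            moreover obtain k where "p = k * a'" using pa' mem_lprinc by blast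
            ultimately have "p * q = (t * k) * a'" by (simp add: mult.assoc)
            then show "p * q \<in> lprinc a'" using mem_lprinc by blast
          qed
          moreover have "C \<noteq> UNIV"
          proof
            assume "C = UNIV"
            then have "1 \<in> lprinc a'" using CA by blast
            then show False using lprinc_unit nu by blast
          qed
          ultimately have "C \<subseteq> lprinc p" using atom_max[OF pid at tC] by blast
          then have "x \<in> lprinc a" using xC lsub[OF pa] by blast
          then show False using x(2) by blast
        qed
      qed
    qed
  qed
qed

end
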